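(* Let $r>1$. For a positive integer $x$, let $q_r(x,x)$ be the probability that the CA competition process with fitness ratio $r$ started at $(x,x)$ satisfies $X_t\ne Y_t$ for all $t\ge1$. Then \[ q_r(x,x)\to\frac{r-1}{r+1}\quad\text{as } x\to\infty. \]
   Context: The CA competition process with fitness ratio $r\ge 1$ started at $(x_0,y_0)$ is the discrete-time Markov chain $\{(X_t,Y_t)\}_{t\ge0}$ on $\{(x,y)\in\mathbb{Z}^2: x\ge1,y\ge1\}$ with $(X_0,Y_0)=(x_0,y_0)$ and transition probabilities: from $(x,y)$ it moves to $(x+1,y)$ with probability $\frac{rx}{rx+y}$ and to $(x,y+1)$ with probability $\frac{y}{rx+y}$. *)

theory Defs
  imports Complex_Main
begin

definition ca_px :: "real \<Rightarrow> nat \<Rightarrow> nat \<Rightarrow> real" where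
  "ca_px r x y = r * real x / (r * real x + real y)"

definition ca_py :: "real \<Rightarrow> nat \<Rightarrow> nat \<Rightarrow> real" where
  "ca_py r x y = real y / (r * real x + real y)"

text \<open>ca_avoid r n x y = probability that the process started at (x,y) satisfies
  X_t \<noteq> Y_t for all 1 \<le> t \<le> n (first-step decomposition of the path probability).\<close>

fun ca_avoid :: "real \<Rightarrow> nat \<Rightarrow> nat \<Rightarrow> nat \<Rightarrow> real" where
  "ca_avoid r 0 x y = 1"
| "ca_avoid r (Suc n) x y =
     ca_px r x y * (if Suc x = y then 0 else ca_avoid r n (Suc x) y)
   + ca_py r x y * (if Suc y = x then 0 else ca_avoid r n x (Suc y))"

text \<open>q_r(x,y) = probability that X_t \<noteq> Y_t for all t \<ge> 1: the limit (infimum) of the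
  non-increasing finite-horizon probabilities (continuity of measure from above).\<close>

definition ca_q :: "real \<Rightarrow> nat \<Rightarrow> nat \<Rightarrow> real" where
  "ca_q r x y = (INF n. ca_avoid r n x y)"

end

theory Submission
  imports Defs
begin

lemma px_nonneg: "r > 0 \<Longrightarrow> 0 \<le> ca_px r x y"
  by (simp add: ca_px_def)
lemma py_nonneg: "r > 0 \<Longrightarrow> 0 \<le> ca_py r x y"
  by (simp add: ca_py_def)
lemma pxpy_le: "r > 0 \<Longrightarrow> ca_px r x y + ca_py r x y \<le> 1"
  by (cases "r * real x + real y = 0") (auto simp: ca_px_def ca_py_def add_divide_distrib[symmetric])
lemma pxpy_eq: "r > 0 \<Longrightarrow> x > 0 \<Longrightarrow> ca_py r x y = 1 - ca_px r x y"
proof -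
  assume "r > 0" "x > 0"
  then have "r * real x + real y > 0" by (simp add: add_pos_nonneg)
  then show ?thesis by (simp add: ca_px_def ca_py_def field_simps)
qed

lemma avoid_bounds: assumes "r > 0" shows "0 \<le> ca_avoid r n x y \<and> ca_avoid r n x y \<le> 1"
proof (induction n arbitrary: x y)
  case 0 then show ?case by simp
next
  case (Suc n)
  define A where "A = (if Suc x = y then 0 else ca_avoid r n (Suc x) y)"
  define B where "B = (if Suc y = x then 0 else ca_avoid r n x (Suc y))"
  have A: "0 \<le> A" "A \<le> 1" using Suc by (auto simp: A_def)
  have B: "0 \<le> B" "B \<le> 1" using Suc by (auto simp: B_def)
  have e: "ca_avoid r (Suc n) x y = ca_px r x y * A + ca_py r x y * B" by (simp add: A_def B_def)
  have p: "0 \<le> ca_px r x y" "0 \<le> ca_py r x y" "ca_px r x y + ca_py r x y \<le> 1"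
    using assms px_nonneg py_nonneg pxpy_le by auto
  have "ca_px r x y * A \<le> ca_px r x y" using p A by (simp add: mult_left_le)
  moreover have "ca_py r x y * B \<le> ca_py r x y" using p B by (simp add: mult_left_le)
  ultimately show ?case using e p A B by (simp add: add_nonneg_nonneg)
qed

lemma px_swap: "r > 0 \<Longrightarrow> ca_px r x y = ca_py (1/r) y x"
  unfolding ca_px_def ca_py_def
proof -
  assume r: "r > 0"
  have "1 / r * real y + real x = (r * real x + real y) / r" using r by (simp add: field_simps)
  then show "r * real x / (r * real x + real y) = real x / (1 / r * real y + real x)"
    using r by simp
qed

lemma py_swap: "r > 0 \<Longrightarrow> ca_py r x y = ca_px (1/r) y x"
  unfolding ca_px_def ca_py_def
proof -
  assume r: "r > 0"
  have "1 / r * real y + real x = (r * real x + real y) / r" using r by (simp add: field_simps)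
  then show "real y / (r * real x + real y) = 1 / r * real y / (1 / r * real y + real x)"
    using r by (simp add: divide_divide_eq_right)
qed

lemma avoid_swap: assumes "r > 0" shows "ca_avoid r n x y = ca_avoid (1/r) n y x"
proof (induction n arbitrary: x y)
  case 0 then show ?case by simp
next
  case (Suc n)
  show ?case using Suc px_swap[OF assms] py_swap[OF assms] by (simp add: add.commute)
qed


lemma u_facts:
  fixes \<rho> :: real
  assumes "\<rho> > 0" "\<rho> \<noteq> 1" "K \<ge> 1"
  shows "d \<ge> K \<Longrightarrow> (1 - \<rho>^d)/(1 - \<rho>^K) \<ge> 1"
    and "(1 - \<rho>^d)/(1 - \<rho>^K) \<ge> 0"
    and "0 \<le> ((1 - \<rho>^(e+2)) - (1 - \<rho>^e))/(1 - \<rho>^K)"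
proof -
  consider "\<rho> < 1" | "\<rho> > 1" using assms by linarith
  note c = this
  {
    assume "d \<ge> K"
    show "(1 - \<rho>^d)/(1 - \<rho>^K) \<ge> 1"
    proof (cases rule: c)
      case 1
      have "\<rho>^K < 1" using 1 assms by (simp add: power_less_one_iff)
      moreover have "\<rho>^d \<le> \<rho>^K" using 1 assms \<open>d \<ge> K\<close> by (simp add: power_decreasing)
      ultimately show ?thesis by simp
    next
      case 2
      have "\<rho>^K > 1" using 2 assms by (simp add: one_less_power)
      moreover have "\<rho>^d \<ge> \<rho>^K" using 2 assms \<open>d \<ge> K\<close> by (simp add: power_increasing)
      ultimately show ?thesis by (simp add: le_divide_eq)
    qed
  }
  show "(1 - \<rho>^d)/(1 - \<rho>^K) \<ge> 0"
  proof (cases rule: c)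
    case 1
    have "\<rho>^K < 1" using 1 assms by (simp add: power_less_one_iff)
    moreover have "\<rho>^d \<le> 1" using 1 assms by (simp add: power_le_one)
    ultimately show ?thesis by simp
  next
    case 2
    have "\<rho>^K > 1" using 2 assms by (simp add: one_less_power)
    moreover have "\<rho>^d \<ge> 1" using 2 assms by (simp add: one_le_power)
    ultimately show ?thesis by (simp add: divide_nonpos_neg)
  qed
  show "0 \<le> ((1 - \<rho>^(e+2)) - (1 - \<rho>^e))/(1 - \<rho>^K)"
  proof (cases rule: c)
    case 1
    have "\<rho>^K < 1" using 1 assms by (simp add: power_less_one_iff)
    moreover have "\<rho>^(e+2) \<le> \<rho>^e" using 1 assms by (intro power_decreasing) auto
    ultimately show ?thesis by simp
  next
    case 2
    have "\<rho>^K > 1" using 2 assms by (simp add: one_less_power)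
    moreover have "\<rho>^(e+2) \<ge> \<rho>^e" using 2 assms by (intro power_increasing) auto
    ultimately show ?thesis by (simp add: divide_nonpos_neg)
  qed
qed

lemma harmonic:
  fixes \<rho> :: real
  assumes "\<rho> > 0"
  shows "(1/(1+\<rho>))*(1-\<rho>^(e+2)) + (1 - 1/(1+\<rho>))*(1-\<rho>^e) = 1 - \<rho>^(e+1)"
proof -
  have n: "1 + \<rho> \<noteq> 0" using assms by simp
  have k: "(1-\<rho>^(e+2)) + \<rho>*(1-\<rho>^e) = (1+\<rho>)*(1-\<rho>^(e+1))"
    by (simp add: algebra_simps power_add power2_eq_square)
  have w: "1 - 1/(1+\<rho>) = \<rho>/(1+\<rho>)" using n by (simp add: field_simps)
  have "(1/(1+\<rho>))*(1-\<rho>^(e+2)) + (\<rho>/(1+\<rho>))*(1-\<rho>^e) = ((1-\<rho>^(e+2)) + \<rho>*(1-\<rho>^e))/(1+\<rho>)"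
    by (simp add: add_divide_distrib)
  also have "\<dots> = 1-\<rho>^(e+1)" using k n by simp
  finally show ?thesis using w by simp
qed

lemma superharm:
  fixes \<rho> p Dn :: real
  assumes "\<rho> > 0" "0 \<le> p" "p \<le> 1/(1+\<rho>)"
    and "0 \<le> ((1 - \<rho>^(e+2)) - (1 - \<rho>^e))/Dn"
  shows "p*((1-\<rho>^(e+2))/Dn) + (1-p)*((1-\<rho>^e)/Dn) \<le> (1-\<rho>^(e+1))/Dn"
proof -
  define u0 where "u0 = (1-\<rho>^e)/Dn"
  define u2 where "u2 = (1-\<rho>^(e+2))/Dn"
  define w where "w = 1/(1+\<rho>)"
  have d: "0 \<le> u2 - u0" using assms(4) by (simp add: u0_def u2_def diff_divide_distrib)
  have "p*(u2 - u0) \<le> w*(u2-u0)" using assms(3) d unfolding w_def by (rule mult_right_mono)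
  moreover have "w*u2 + (1 - w)*u0 = (1-\<rho>^(e+1))/Dn"
    using harmonic[OF assms(1), of e] unfolding u0_def u2_def w_def
    by (metis (no_types, lifting) add_divide_distrib times_divide_eq_right)
  ultimately have "p*u2 + (1-p)*u0 \<le> (1-\<rho>^(e+1))/Dn" by (simp add: algebra_simps)
  then show ?thesis by (simp add: u0_def u2_def)
qed

lemma phi_ineq:
  fixes \<beta> p \<rho> :: real
  assumes "\<beta> > 0" "\<rho> > 0" "(\<beta> - 1/\<beta>)*(p - 1/(1+\<rho>)) \<le> 0"
  shows "p*\<beta> + (1-p)/\<beta> \<le> (\<beta> + \<rho>/\<beta>)/(1+\<rho>)"
proof -
  have "p*\<beta> + (1-p)/\<beta> = 1/\<beta> + p*(\<beta> - 1/\<beta>)" by (simp add: algebra_simps diff_divide_distrib)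
  moreover have "(\<beta> + \<rho>/\<beta>)/(1+\<rho>) = 1/\<beta> + (1/(1+\<rho>))*(\<beta> - 1/\<beta>)"
  proof -
    have n: "1 + \<rho> \<noteq> 0" "\<beta> \<noteq> 0" "\<beta> + \<beta>*\<rho> \<noteq> 0" using assms by (auto simp: add_pos_pos) (smt (verit) mult_pos_pos)
    have "(\<beta> + \<rho>/\<beta>)/(1+\<rho>) * (\<beta>*(1+\<rho>)) = \<beta>*\<beta> + \<rho>" using n by (simp add: field_simps)
    moreover have "(1/\<beta> + (1/(1+\<rho>))*(\<beta> - 1/\<beta>)) * (\<beta>*(1+\<rho>)) = \<beta>*\<beta> + \<rho>"
    proof -
      have a: "(1/\<beta>) * (\<beta>*(1+\<rho>)) = 1+\<rho>" using n by simp
      have b: "((1/(1+\<rho>))*(\<beta> - 1/\<beta>)) * (\<beta>*(1+\<rho>)) = \<beta>*\<beta> - 1"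
        using n by (simp add: field_simps)
      show ?thesis using a b by (simp add: distrib_right)
    qed
    ultimately show ?thesis using n by (metis mult_cancel_right no_zero_divisors)
  qed
  ultimately show ?thesis using assms(3) by (simp add: algebra_simps)
qed

lemma theta_lt1:
  fixes \<beta> \<rho> :: real
  assumes "\<beta> > 0" "\<rho> > 0" "(\<beta> - 1)*(\<beta> - \<rho>) < 0"
  shows "(\<beta> + \<rho>/\<beta>)/(1+\<rho>) < 1" "0 \<le> (\<beta> + \<rho>/\<beta>)/(1+\<rho>)"
proof -
  have "\<beta>*\<beta> + \<rho> < \<beta>*(1+\<rho>)" using assms(3) by (simp add: algebra_simps)
  then have "\<beta> + \<rho>/\<beta> < 1 + \<rho>" using assms(1) by (simp add: field_simps)
  then show "(\<beta> + \<rho>/\<beta>)/(1+\<rho>) < 1" using assms by simp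
  show "0 \<le> (\<beta> + \<rho>/\<beta>)/(1+\<rho>)" using assms by simp
qed


lemma c_ge: fixes \<beta> :: real assumes "\<beta> > 0" "d \<le> K" shows "1 \<le> (1 + (1/\<beta>)^K) * \<beta>^d"
proof (cases "\<beta> \<ge> 1")
  case True
  then have "1 \<le> \<beta>^d" by (simp add: one_le_power)
  moreover have "0 \<le> (1/\<beta>)^K * \<beta>^d" using assms by simp
  ultimately show ?thesis by (simp add: distrib_right)
next
  case False
  then have "\<beta>^K \<le> \<beta>^d" using assms by (intro power_decreasing) auto
  then have "(1/\<beta>)^K * \<beta>^K \<le> (1/\<beta>)^K * \<beta>^d" using assms by (intro mult_left_mono) auto
  moreover have "(1/\<beta>)^K * \<beta>^K = 1" using assms by (simp add: power_one_over)
  moreover have "0 \<le> \<beta>^d" using assms by simp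
  ultimately show ?thesis by (simp add: distrib_right)
qed

lemma upper_region:
  fixes r \<rho> \<beta> \<theta> :: real and K lo :: nat
  assumes r: "r > 0" and \<rho>: "\<rho> > 0" "\<rho> \<noteq> 1" and K: "K \<ge> 1" and \<beta>: "\<beta> > 0" and \<theta>: "\<theta> \<ge> 0"
    and pb: "\<And>X Y. lo \<le> X \<Longrightarrow> Y < X \<Longrightarrow> X - Y < K \<Longrightarrow> ca_px r X Y \<le> 1/(1+\<rho>)"
    and phi: "\<And>X Y. lo \<le> X \<Longrightarrow> Y < X \<Longrightarrow> X - Y < K \<Longrightarrow> ca_px r X Y * \<beta> + (1 - ca_px r X Y)/\<beta> \<le> \<theta>"
  shows "lo \<le> X \<Longrightarrow> Y < X \<Longrightarrow>
    ca_avoid r n X Y \<le> (1-\<rho>^(X-Y))/(1-\<rho>^K) + (1 + (1/\<beta>)^K)*\<theta>^n*\<beta>^(X-Y)"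
proof (induction n arbitrary: X Y)
  case 0
  show ?case
  proof (cases "X - Y \<ge> K")
    case True
    then have "1 \<le> (1-\<rho>^(X-Y))/(1-\<rho>^K)" using u_facts(1)[OF \<rho> K] by blast
    moreover have "0 \<le> (1 + (1/\<beta>)^K)*\<theta>^0*\<beta>^(X-Y)" using \<beta> by simp
    ultimately show ?thesis by simp
  next
    case False
    then have "1 \<le> (1 + (1/\<beta>)^K)*\<beta>^(X-Y)" using c_ge[OF \<beta>] by simp
    moreover have "0 \<le> (1-\<rho>^(X-Y))/(1-\<rho>^K)" using u_facts(2)[OF \<rho> K] by blast
    ultimately show ?thesis by simp
  qed
next
  case (Suc n)
  define c where "c = 1 + (1/\<beta>)^K"
  have c0: "c \<ge> 0" using \<beta> by (simp add: c_def add_nonneg_nonneg)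
  define k where "k = c * \<theta>^n"
  have k0: "k \<ge> 0" using c0 \<theta> by (simp add: k_def)
  define u where "u = (\<lambda>d::nat. (1-\<rho>^d)/(1-\<rho>^K))"
  have ab: "0 \<le> ca_avoid r m a b \<and> ca_avoid r m a b \<le> 1" for m a b using avoid_bounds[OF r] by blast
  show ?case
  proof (cases "X - Y \<ge> K")
    case True
    then have "1 \<le> (1-\<rho>^(X-Y))/(1-\<rho>^K)" using u_facts(1)[OF \<rho> K] by blast
    moreover have "0 \<le> (1 + (1/\<beta>)^K)*\<theta>^(Suc n)*\<beta>^(X-Y)" using \<beta> \<theta> c0 by (simp add: c_def)
    ultimately show ?thesis using ab[of "Suc n" X Y] by simp
  next
    case False
    obtain e where e: "X - Y = Suc e" using Suc.prems by (metis Suc_diff_Suc)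
    have X0: "X > 0" using Suc.prems by simp
    define p where "p = ca_px r X Y"
    have py: "ca_py r X Y = 1 - p" using pxpy_eq[OF r X0] by (simp add: p_def)
    have p0: "0 \<le> p" "p \<le> 1" using px_nonneg[OF r] pxpy_le[OF r, of X Y] py_nonneg[OF r, of X Y] py
      by (auto simp: p_def)
    define A where "A = ca_avoid r n (Suc X) Y"
    define B where "B = (if Suc Y = X then 0 else ca_avoid r n X (Suc Y))"
    have eq: "ca_avoid r (Suc n) X Y = p * A + (1-p) * B"
      using Suc.prems by (simp add: A_def B_def p_def py)
    have Ab: "A \<le> u (e+2) + k * \<beta>^(e+2)"
    proof -
      have "Suc X - Y = e + 2" using e Suc.prems by simp
      then show ?thesis using Suc.IH[of "Suc X" Y] Suc.prems by (simp add: A_def u_def k_def c_def)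
    qed
    have Bb: "B \<le> u e + k * \<beta>^e"
    proof (cases "Suc Y = X")
      case True
      then have "e = 0" using e by simp
      then show ?thesis using True k0 by (simp add: B_def u_def)
    next
      case False
      then have "Y + 1 < X" "X - Suc Y = e" using e Suc.prems by auto
      then show ?thesis using Suc.IH[of X "Suc Y"] Suc.prems False by (simp add: B_def u_def k_def c_def)
    qed
    have pl: "p \<le> 1/(1+\<rho>)" using pb[OF Suc.prems] False by (simp add: p_def)
    have sup: "p * u (e+2) + (1-p) * u e \<le> u (e+1)"
      using superharm[OF \<rho>(1) p0(1) pl u_facts(3)[OF \<rho> K]] by (simp add: u_def)
    have ph0: "p * \<beta> + (1-p)/\<beta> \<le> \<theta>" using phi[OF Suc.prems] False by (simp add: p_def)
    have ph: "p * \<beta>^(e+2) + (1-p) * \<beta>^e \<le> \<theta> * \<beta>^(e+1)"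
    proof -
      have "p * \<beta>^(e+2) + (1-p) * \<beta>^e = (p * \<beta> + (1-p)/\<beta>) * \<beta>^(e+1)"
        using \<beta> by (simp add: field_simps power_add power2_eq_square)
      also have "\<dots> \<le> \<theta> * \<beta>^(e+1)" using ph0 \<beta> by (intro mult_right_mono) auto
      finally show ?thesis .
    qed
    have "p * A + (1-p) * B \<le> p * (u (e+2) + k * \<beta>^(e+2)) + (1-p) * (u e + k * \<beta>^e)"
      using Ab Bb p0 by (intro add_mono mult_left_mono) auto
    also have "\<dots> = (p * u (e+2) + (1-p) * u e) + k * (p * \<beta>^(e+2) + (1-p) * \<beta>^e)"
      by (simp add: algebra_simps)
    also have "\<dots> \<le> u (e+1) + k * (\<theta> * \<beta>^(e+1))"
      using sup ph k0 by (intro add_mono mult_left_mono) auto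
    finally show ?thesis using eq e by (simp add: u_def k_def c_def algebra_simps)
  qed
qed


lemma q_le: assumes "r > 0" shows "ca_q r x y \<le> ca_avoid r n x y"
  unfolding ca_q_def
  by (rule cINF_lower) (auto intro!: bdd_belowI2[where m=0] simp: avoid_bounds[OF assms])

lemma q_ge: assumes "\<And>n. L \<le> ca_avoid r n x y" shows "L \<le> ca_q r x y"
  unfolding ca_q_def by (rule cINF_greatest) (auto simp: assms)

lemma gamma_cond:
  fixes \<gamma> :: real
  assumes "\<gamma> = 1 - real K/(real x + 1)" "x + 1 \<le> X" "Y < X" "X - Y < K"
  shows "real X * \<gamma> \<le> real Y"
proof -
  have "real K * (real x + 1) \<le> real X * real K"
    using assms(2) by (simp add: mult.commute mult_left_mono)
  then have "real K \<le> real X * real K / (real x + 1)" by (simp add: le_divide_eq add_pos_nonneg)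
  moreover have "real X \<le> real Y + real K" using assms(3,4) by linarith
  moreover have "real X * \<gamma> = real X - real X * real K/(real x + 1)"
    using assms(1) by (simp add: right_diff_distrib)
  ultimately show ?thesis by linarith
qed

lemma pb_lemma:
  fixes s \<rho> :: real
  assumes "s > 0" "\<rho> > 0" "real X * (s*\<rho>) \<le> real Y" "X > 0"
  shows "ca_px s X Y \<le> 1/(1+\<rho>)"
proof -
  have d: "s * real X + real Y > 0" using assms by (simp add: add_pos_nonneg)
  have "s * real X * (1+\<rho>) \<le> s * real X + real Y" using assms(3) by (simp add: algebra_simps)
  then show ?thesis using d assms(2) unfolding ca_px_def by (simp add: divide_le_eq field_simps)
qed

lemma px_lower:
  fixes r :: real
  assumes "r > 0" "Y \<le> X" "X > 0"
  shows "r/(r+1) \<le> ca_px r X Y"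
proof -
  have d: "r * real X + real Y > 0" using assms by (simp add: add_pos_nonneg)
  have "r * (r * real X + real Y) \<le> r * real X * (r+1)" using assms by (simp add: algebra_simps)
  then show ?thesis using d assms unfolding ca_px_def by (simp add: divide_le_eq le_divide_eq field_simps)
qed


lemma q_upper:
  fixes r \<gamma> :: real and K x :: nat
  assumes r: "r > 1" and K: "K \<ge> 1" and x: "x > 0"
    and g: "\<gamma> = 1 - real K/(real x + 1)" and g1: "\<gamma> > 1/r"
  shows "ca_q r x x \<le> r/(r+1) * ((1-\<gamma>/r)/(1-(\<gamma>/r)^K)) + 1/(r+1) * ((1-r*\<gamma>)/(1-(r*\<gamma>)^K))"
proof -
  have r0: "r > 0" using r by simp
  have gpos: "\<gamma> > 0" using g1 r0 by (smt (verit) divide_pos_pos)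
  have gle: "\<gamma> \<le> 1" using g by simp
  define \<rho>1 where "\<rho>1 = \<gamma>/r"
  define \<tau> where "\<tau> = 1/r"
  define \<beta>1 where "\<beta>1 = (1+\<tau>)/2"
  define \<theta>1 where "\<theta>1 = (\<beta>1 + \<tau>/\<beta>1)/(1+\<tau>)"
  define \<rho>2 where "\<rho>2 = r*\<gamma>"
  define \<beta>2 where "\<beta>2 = (1+\<rho>2)/2"
  define \<theta>2 where "\<theta>2 = (\<beta>2 + \<rho>2/\<beta>2)/(1+\<rho>2)"
  have \<tau>: "0 < \<tau>" "\<tau> < 1" using r by (auto simp: \<tau>_def)
  have \<rho>1: "0 < \<rho>1" "\<rho>1 < 1" using gpos gle r by (auto simp: \<rho>1_def)
  have \<rho>2: "1 < \<rho>2" using g1 r0 by (simp add: \<rho>2_def divide_less_eq mult.commute)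
  have \<beta>1: "\<tau> < \<beta>1" "\<beta>1 < 1" using \<tau> by (auto simp: \<beta>1_def)
  have \<beta>2: "1 < \<beta>2" "\<beta>2 < \<rho>2" using \<rho>2 by (auto simp: \<beta>2_def)
  have th1: "\<theta>1 < 1" "0 \<le> \<theta>1"
    using theta_lt1[of \<beta>1 \<tau>] \<beta>1 \<tau> by (auto simp: \<theta>1_def mult_neg_pos)
  have th2: "\<theta>2 < 1" "0 \<le> \<theta>2"
    using theta_lt1[of \<beta>2 \<rho>2] \<beta>2 \<rho>2 by (auto simp: \<theta>2_def mult_pos_neg mult_neg_pos)
  have U: "ca_avoid r n (Suc x) x \<le> (1-\<rho>1^1)/(1-\<rho>1^K) + (1 + (1/\<beta>1)^K)*\<theta>1^n*\<beta>1^1" for n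
  proof -
    have "ca_avoid r n (Suc x) x \<le> (1-\<rho>1^(Suc x - x))/(1-\<rho>1^K) + (1 + (1/\<beta>1)^K)*\<theta>1^n*\<beta>1^(Suc x - x)"
    proof (rule upper_region[where lo = "Suc x"])
      show "r > 0" "\<rho>1 > 0" "\<rho>1 \<noteq> 1" "K \<ge> 1" "\<beta>1 > 0" "\<theta>1 \<ge> 0" "Suc x \<le> Suc x" "x < Suc x"
        using r0 \<rho>1 K \<beta>1 \<tau> th1 by auto
      fix X Y assume h: "Suc x \<le> X" "Y < X" "X - Y < K"
      have "real X * \<gamma> \<le> real Y" using gamma_cond[OF g _ h(2,3)] h(1) by simp
      then show pl: "ca_px r X Y \<le> 1/(1+\<rho>1)"
        using pb_lemma[OF r0 \<rho>1(1), of X Y] h r0 by (simp add: \<rho>1_def)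
      have "r/(r+1) \<le> ca_px r X Y" using px_lower[OF r0, of Y X] h by simp
      moreover have "1/(1+\<tau>) = r/(r+1)" using r0 by (simp add: \<tau>_def field_simps)
      ultimately have a: "0 \<le> ca_px r X Y - 1/(1+\<tau>)" by simp
      have "\<beta>1 * \<beta>1 \<le> 1" using \<beta>1 \<tau> by (intro mult_le_one) auto
      then have "\<beta>1 - 1/\<beta>1 \<le> 0" using \<beta>1 \<tau> by (simp add: field_simps)
      then have "(\<beta>1 - 1/\<beta>1) * (ca_px r X Y - 1/(1+\<tau>)) \<le> 0"
        using a by (intro mult_nonpos_nonneg) auto
      then show "ca_px r X Y * \<beta>1 + (1 - ca_px r X Y)/\<beta>1 \<le> \<theta>1"
        unfolding \<theta>1_def using phi_ineq[of \<beta>1 \<tau>] \<beta>1 \<tau> by auto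
    qed
    then show ?thesis by simp
  qed
  \<comment> \<open>lower region via swap\<close>
  have L: "ca_avoid r n x (Suc x) \<le> (1-\<rho>2^1)/(1-\<rho>2^K) + (1 + (1/\<beta>2)^K)*\<theta>2^n*\<beta>2^1" for n
  proof -
    have r': "1/r > 0" using r0 by simp
    have "ca_avoid (1/r) n (Suc x) x \<le> (1-\<rho>2^(Suc x - x))/(1-\<rho>2^K) + (1 + (1/\<beta>2)^K)*\<theta>2^n*\<beta>2^(Suc x - x)"
    proof (rule upper_region[where lo = "Suc x"])
      show "1/r > 0" "\<rho>2 > 0" "\<rho>2 \<noteq> 1" "K \<ge> 1" "\<beta>2 > 0" "\<theta>2 \<ge> 0" "Suc x \<le> Suc x" "x < Suc x"
        using r0 \<rho>2 K \<beta>2 th2 by auto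
      fix X Y assume h: "Suc x \<le> X" "Y < X" "X - Y < K"
      have "real X * \<gamma> \<le> real Y" using gamma_cond[OF g _ h(2,3)] h(1) by simp
      then show pl: "ca_px (1/r) X Y \<le> 1/(1+\<rho>2)"
        using pb_lemma[OF r', of \<rho>2 X Y] h r0 \<rho>2 by (simp add: \<rho>2_def)
      have "1 \<le> \<beta>2 * \<beta>2" using \<beta>2 by (smt (verit) mult_le_cancel_left1)
      then have "0 \<le> \<beta>2 - 1/\<beta>2" using \<beta>2 by (simp add: field_simps)
      then have "(\<beta>2 - 1/\<beta>2) * (ca_px (1/r) X Y - 1/(1+\<rho>2)) \<le> 0"
        using pl by (intro mult_nonneg_nonpos) auto
      then show "ca_px (1/r) X Y * \<beta>2 + (1 - ca_px (1/r) X Y)/\<beta>2 \<le> \<theta>2"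
        unfolding \<theta>2_def using phi_ineq[of \<beta>2 \<rho>2] \<beta>2 \<rho>2 by auto
    qed
    then show ?thesis using avoid_swap[OF r0, of n x "Suc x"] by simp
  qed
  define u1 where "u1 = (1-\<rho>1^1)/(1-\<rho>1^K)"
  define u2 where "u2 = (1-\<rho>2^1)/(1-\<rho>2^K)"
  define S where "S = (\<lambda>n. r/(r+1) * (u1 + (1 + (1/\<beta>1)^K)*\<theta>1^n*\<beta>1^1) + 1/(r+1) * (u2 + (1 + (1/\<beta>2)^K)*\<theta>2^n*\<beta>2^1))"
  have rx: "r * real x + real x = (r+1) * real x" by (simp add: algebra_simps)
  have xr: "real x > 0" using x by simp
  have px: "ca_px r x x = r/(r+1)" unfolding ca_px_def rx using xr by simp
  have py: "ca_py r x x = 1/(r+1)" unfolding ca_py_def rx using xr by simp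
  have le: "ca_q r x x \<le> S n" for n
  proof -
    have "ca_q r x x \<le> ca_avoid r (Suc n) x x" by (rule q_le[OF r0])
    also have "\<dots> = r/(r+1) * ca_avoid r n (Suc x) x + 1/(r+1) * ca_avoid r n x (Suc x)"
      using px py by simp
    also have "\<dots> \<le> S n" unfolding S_def u1_def u2_def
      using U[of n] L[of n] r0 by (intro add_mono mult_left_mono) auto
    finally show ?thesis .
  qed
  have "S \<longlonglongrightarrow> r/(r+1) * (u1 + (1 + (1/\<beta>1)^K)*0*\<beta>1^1) + 1/(r+1) * (u2 + (1 + (1/\<beta>2)^K)*0*\<beta>2^1)"
    unfolding S_def using th1 th2
    by (intro tendsto_intros LIMSEQ_power_zero) auto
  then have "ca_q r x x \<le> r/(r+1) * u1 + 1/(r+1) * u2"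
    using le by (intro LIMSEQ_le_const) auto
  then show ?thesis by (simp add: u1_def u2_def \<rho>1_def \<rho>2_def)
qed


lemma lower_region:
  fixes r :: real
  assumes r: "r > 1"
  shows "Y < X \<Longrightarrow> 1 - (1/r)^(X-Y) \<le> ca_avoid r n X Y"
proof (induction n arbitrary: X Y)
  case 0
  have "0 \<le> (1/r)^(X-Y)" using r by simp
  then show ?case by simp
next
  case (Suc n)
  have r0: "r > 0" using r by simp
  define \<tau> where "\<tau> = 1/r"
  have \<tau>: "0 < \<tau>" "\<tau> < 1" using r by (auto simp: \<tau>_def)
  define h where "h = (\<lambda>d::nat. 1 - \<tau>^d)"
  obtain e where e: "X - Y = Suc e" using Suc.prems by (metis Suc_diff_Suc)
  have X0: "X > 0" using Suc.prems by simp
  define p where "p = ca_px r X Y"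
  have py: "ca_py r X Y = 1 - p" using pxpy_eq[OF r0 X0] by (simp add: p_def)
  have p0: "0 \<le> p" "p \<le> 1" using px_nonneg[OF r0] pxpy_le[OF r0, of X Y] py_nonneg[OF r0, of X Y] py
    by (auto simp: p_def)
  have pl: "1/(1+\<tau>) \<le> p"
  proof -
    have "r/(r+1) \<le> p" using px_lower[OF r0, of Y X] Suc.prems by (simp add: p_def)
    moreover have "1/(1+\<tau>) = r/(r+1)" using r0 by (simp add: \<tau>_def field_simps)
    ultimately show ?thesis by simp
  qed
  define A where "A = ca_avoid r n (Suc X) Y"
  define B where "B = (if Suc Y = X then 0 else ca_avoid r n X (Suc Y))"
  have eq: "ca_avoid r (Suc n) X Y = p * A + (1-p) * B"
    using Suc.prems by (simp add: A_def B_def p_def py)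
  have Ab: "h (e+2) \<le> A"
  proof -
    have k: "Suc X - Y = e + 2" using e Suc.prems by simp
    have "1 - (1/r)^(Suc X - Y) \<le> A" unfolding A_def by (rule Suc.IH) (use Suc.prems in simp)
    then show ?thesis by (simp only: h_def \<tau>_def k)
  qed
  have Bb: "h e \<le> B"
  proof (cases "Suc Y = X")
    case True
    then have "e = 0" using e by simp
    then show ?thesis using True by (simp add: B_def h_def)
  next
    case False
    then have "Y + 1 < X" "X - Suc Y = e" using e Suc.prems by auto
    then have "1 - (1/r)^(X - Suc Y) \<le> ca_avoid r n X (Suc Y)" by (intro Suc.IH) simp
    then show ?thesis using False \<open>X - Suc Y = e\<close> by (simp add: B_def h_def \<tau>_def)
  qed
  define w where "w = 1/(1+\<tau>)"
  have "\<tau>^(e+2) \<le> \<tau>^e" using \<tau> by (intro power_decreasing) auto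
  then have d: "0 \<le> h (e+2) - h e" unfolding h_def by simp
  have "w*(h (e+2) - h e) \<le> p*(h (e+2) - h e)" using pl d unfolding w_def by (rule mult_right_mono)
  moreover have "w*h (e+2) + (1 - w)*h e = h (e+1)"
    using harmonic[OF \<tau>(1), of e] unfolding h_def w_def by simp
  ultimately have sub: "h (e+1) \<le> p * h (e+2) + (1-p) * h e" by (simp add: algebra_simps)
  have "p * h (e+2) + (1-p) * h e \<le> p * A + (1-p) * B"
    using Ab Bb p0 by (intro add_mono mult_left_mono) auto
  then show ?case using sub eq e by (simp add: h_def \<tau>_def)
qed

lemma q_lower:
  fixes r :: real
  assumes r: "r > 1" and x: "x > 0"
  shows "(r-1)/(r+1) \<le> ca_q r x x"
proof (rule q_ge)
  fix n
  have r0: "r > 0" using r by simp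
  have rx: "r * real x + real x = (r+1) * real x" by (simp add: algebra_simps)
  have xr: "real x > 0" using x by simp
  have px: "ca_px r x x = r/(r+1)" unfolding ca_px_def rx using xr by simp
  have py: "ca_py r x x = 1/(r+1)" unfolding ca_py_def rx using xr by simp
  show "(r-1)/(r+1) \<le> ca_avoid r n x x"
  proof (cases n)
    case 0 then show ?thesis using r by simp
  next
    case (Suc m)
    have "ca_avoid r n x x = r/(r+1) * ca_avoid r m (Suc x) x + 1/(r+1) * ca_avoid r m x (Suc x)"
      using px py Suc by simp
    moreover have "1 - (1/r)^1 \<le> ca_avoid r m (Suc x) x" using lower_region[OF r, of x "Suc x" m] by simp
    moreover have "0 \<le> ca_avoid r m x (Suc x)" using avoid_bounds[OF r0] by blast
    moreover have "(r-1)/(r+1) = r/(r+1) * (1 - (1/r)^1)"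
    proof -
      have "r*(1-1/r) = r - 1" using r0 by (simp add: right_diff_distrib)
      then show ?thesis by (simp add: times_divide_eq_left[symmetric])
    qed
    ultimately show ?thesis using r0
      by (smt (verit, best) divide_nonneg_pos mult_left_mono mult_nonneg_nonneg)
  qed
qed


theorem lemma3:
  fixes r :: real
  assumes "r > 1"
  shows "((\<lambda>x::nat. ca_q r x x) \<longlongrightarrow> (r - 1) / (r + 1)) sequentially"
proof (rule order_tendstoI)
  have r: "r > 1" using assms .
  have r0: "r > 0" using r by simp
  fix a assume "a < (r-1)/(r+1)"
  show "\<forall>\<^sub>F x in sequentially. a < ca_q r x x"
    using eventually_gt_at_top[of 0]
    by eventually_elim (use q_lower[OF r] \<open>a < _\<close> in \<open>meson less_le_trans\<close>)
next
  have r: "r > 1" using assms .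
  have r0: "r > 0" using r by simp
  fix a assume aL: "(r-1)/(r+1) < a"
  define BK where "BK = (\<lambda>K::nat. r/(r+1) * ((1-1/r)/(1-(1/r)^K)) + 1/(r+1) * ((1-r)/(1-r^K)))"
  have t1: "(\<lambda>K. (1/r)^K) \<longlonglongrightarrow> 0" using r by (intro LIMSEQ_power_zero) auto
  have e2: "(1-r)/(1-r^K) = ((1-r)*(1/r)^K)/((1/r)^K - 1)" for K
  proof -
    have rk: "r^K * (1/r)^K = 1" using r0 by (simp add: power_one_over)
    have p: "(1/r)^K > 0" using r0 by simp
    have "((1-r)*(1/r)^K)/((1/r)^K - 1) = ((1-r)*(1/r)^K)/((1/r)^K - r^K * (1/r)^K)" using rk by simp
    also have "\<dots> = ((1-r)*(1/r)^K)/((1 - r^K) * (1/r)^K)" by (simp add: algebra_simps)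
    also have "\<dots> = (1-r)/(1-r^K)" using p r0 by simp
    finally show ?thesis by simp
  qed
  have "BK \<longlonglongrightarrow> r/(r+1) * ((1-1/r)/(1-0)) + 1/(r+1) * (((1-r)*0)/(0 - 1))"
    unfolding BK_def e2 by (intro tendsto_intros t1) auto
  moreover have "r/(r+1) * ((1-1/r)/(1-0)) + 1/(r+1) * (((1-r)*0)/(0 - 1)) = (r-1)/(r+1)"
  proof -
    have "r*(1-1/r) = r - 1" using r0 by (simp add: right_diff_distrib)
    then show ?thesis by (simp add: times_divide_eq_left[symmetric])
  qed
  ultimately have "BK \<longlonglongrightarrow> (r-1)/(r+1)" by (simp only:)
  then have "\<forall>\<^sub>F K in sequentially. BK K < a" using aL by (rule order_tendstoD)
  then have "\<forall>\<^sub>F K in sequentially. BK K < a \<and> K \<ge> 1"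
    using eventually_ge_at_top[of 1] by eventually_elim auto
  then obtain N where "\<forall>n\<ge>N. BK n < a \<and> n \<ge> 1" unfolding eventually_sequentially by blast
  then have K: "BK N < a" "N \<ge> 1" by auto
  define K where "K = N"
  have K: "BK K < a" "K \<ge> 1" using K by (simp_all add: K_def)
  define \<gamma> where "\<gamma> = (\<lambda>x::nat. 1 - real K/(real x + 1))"
  have g1: "\<gamma> \<longlonglongrightarrow> 1"
  proof -
    have "(\<lambda>x::nat. real K * inverse (real (Suc x))) \<longlonglongrightarrow> real K * 0"
      by (rule tendsto_mult[OF tendsto_const LIMSEQ_inverse_real_of_nat])
    then have "(\<lambda>x::nat. 1 - real K * inverse (real (Suc x))) \<longlonglongrightarrow> 1 - real K * 0"
      by (rule tendsto_diff[OF tendsto_const])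
    then show ?thesis unfolding \<gamma>_def by (simp add: divide_inverse add.commute)
  qed
  define B where "B = (\<lambda>x. r/(r+1) * ((1-\<gamma> x/r)/(1-(\<gamma> x/r)^K)) + 1/(r+1) * ((1-r*\<gamma> x)/(1-(r*\<gamma> x)^K)))"
  have nz1: "1 - (1/r)^K \<noteq> 0"
  proof -
    have "(1/r)^K < 1" using r K by (simp add: power_less_one_iff)
    then show ?thesis by simp
  qed
  have nz2: "1 - r^K \<noteq> 0"
  proof -
    have "r^K > 1" using r K by (simp add: one_less_power)
    then show ?thesis by simp
  qed
  have "B \<longlonglongrightarrow> r/(r+1) * ((1-1/r)/(1-(1/r)^K)) + 1/(r+1) * ((1-r*1)/(1-(r*1)^K))"
    unfolding B_def using nz1 nz2 r0 by (intro tendsto_intros g1) auto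
  then have "B \<longlonglongrightarrow> BK K" by (simp add: BK_def)
  then have ev1: "\<forall>\<^sub>F x in sequentially. B x < a" using K(1) by (rule order_tendstoD)
  have ev2: "\<forall>\<^sub>F x in sequentially. \<gamma> x > 1/r"
    using g1 r by (intro order_tendstoD) auto
  show "\<forall>\<^sub>F x in sequentially. ca_q r x x < a"
    using ev1 ev2 eventually_gt_at_top[of 0]
  proof eventually_elim
    case (elim x)
    have "ca_q r x x \<le> B x" unfolding B_def
      by (rule q_upper[OF r K(2) elim(3)]) (use elim in \<open>auto simp: \<gamma>_def\<close>)
    then show ?case using elim(1) by simp
  qed
qed

end
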